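(* In the additive penalized estimation problem described in the context, suppose that for some $1\le j\le p$ the covariate $x^{(j)}$ is a scalar in $[0,1]$ and $\mathcal G_j$ is the bounded variation space $\mathcal V^m$ with $m=1$ or $m=2$ and semi-norm $\|g_j\|_{F,j}=\mathrm{TV}(g_j^{(m-1)})$. Then a minimizer $\hat g=\sum_{k=1}^p\hat g_k$ of $K_n$ (when one exists) can be chosen such that $\hat g_j$ is piecewise constant with jump points only in $\{X_i^{(j)}:i=1,\dots,n\}$ if $m=1$, or $\hat g_j$ is continuous and piecewise linear with break points only in $\{X_i^{(j)}:i=1,\dots,n\}$ if $m=2$.
   Context: Data $(Y_i,X_i)$, $i=1,\dots,n$. For $k=1,\dots,p$, $x^{(k)}$ is a sub-vector of coordinates of $x$, $\mathcal G_k$ is a vector space of functions of $x^{(k)}$ with semi-norm $\|\cdot\|_{F,k}$, $\mathcal G=\{\sum_kg_k(x^{(k)}):g_k\in\mathcal G_k\}$. $\|f\|_n^2=n^{-1}\sum_if(X_i)^2$, $\|Y-g\|_n^2=n^{-1}\sum_i\{Y_i-g(X_i)\}^2$. With positive constants $\rho_{nk},\lambda_{nk}$ and $A_0>1$, $K_n(g)=\|Y-g\|_n^2/2+A_0\sum_{k=1}^p(\rho_{nk}\|g_k\|_{F,k}+\lambda_{nk}\|g_k\|_n)$, minimized over $g\in\mathcal G$ and decompositions $g=\sum_kg_k$. Total variation: $\mathrm{TV}(f)=\sup\sum_{i=1}^k|f(z_i)-f(z_{i-1})|$ over partitions $0\le z_0<\dots<z_k\le1$. $\mathcal V^m$ is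 the set of $g:[0,1]\to\mathbb R$ such that $g^{(m-2)}$ is absolutely continuous if $m\ge2$ and $\|g\|_{L_1}+\mathrm{TV}(g^{(m-1)})<\infty$. *)

theory Defs
  imports "HOL-Analysis.Analysis"
begin

definition TV :: "(real \<Rightarrow> real) \<Rightarrow> ereal" where
  "TV f = (SUP kz \<in> {(k::nat, z::nat \<Rightarrow> real). strict_mono_on {0..k} z \<and> 0 \<le> z 0 \<and> z k \<le> 1}.
             ereal (\<Sum>i\<in>{1..fst kz}. \<bar>f (snd kz i) - f (snd kz (i - 1))\<bar>))"

definition abs_cont01 :: "(real \<Rightarrow> real) \<Rightarrow> bool" where
  "abs_cont01 g \<longleftrightarrow> (\<forall>e>0. \<exists>d>0. \<forall>(k::nat) (a::nat \<Rightarrow> real) b.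
      (\<forall>i<k. 0 \<le> a i \<and> a i \<le> b i \<and> b i \<le> 1) \<and>
      (\<forall>i<k. \<forall>l<k. i \<noteq> l \<longrightarrow> b i \<le> a l \<or> b l \<le> a i) \<and>
      (\<Sum>i<k. b i - a i) < d \<longrightarrow> (\<Sum>i<k. \<bar>g (b i) - g (a i)\<bar>) < e)"

definition deriv_versions :: "(real \<Rightarrow> real) \<Rightarrow> (real \<Rightarrow> real) set" where
  "deriv_versions g = {d. d absolutely_integrable_on {0..1} \<and>
      (\<forall>x\<in>{0..1}. g x = g 0 + integral {0..x} d)}"

text \<open>The bounded variation space V^m on [0,1], for m = 1, 2.  (Values outside [0,1] are irrelevant.)\<close>
definition Vm :: "nat \<Rightarrow> (real \<Rightarrow> real) set" where
  "Vm m = {g. g absolutely_integrable_on {0..1} \<and>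
     (if m = 1 then TV g < \<infinity>
      else abs_cont01 g \<and> (\<exists>d\<in>deriv_versions g. TV d < \<infinity>))}"

text \<open>Semi-norm TV(g^(m-1)); for m = 2 the derivative is only defined a.e., and we take the
  infimum of TV over all versions.\<close>
definition Vm_seminorm :: "nat \<Rightarrow> (real \<Rightarrow> real) \<Rightarrow> real" where
  "Vm_seminorm m g = real_of_ereal (if m = 1 then TV g else (INF d\<in>deriv_versions g. TV d))"

definition emp_norm :: "nat \<Rightarrow> (nat \<Rightarrow> 'x) \<Rightarrow> ('x \<Rightarrow> real) \<Rightarrow> real" where
  "emp_norm n X f = sqrt ((1 / real n) * (\<Sum>i\<in>{1..n}. (f (X i))^2))"

text \<open>The criterion K_n evaluated at a decomposition gs (g = sum of gs k, k = 1..p).\<close>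
definition Kn :: "nat \<Rightarrow> nat \<Rightarrow> (nat \<Rightarrow> 'x) \<Rightarrow> (nat \<Rightarrow> real) \<Rightarrow> real \<Rightarrow> (nat \<Rightarrow> real)
    \<Rightarrow> (nat \<Rightarrow> real) \<Rightarrow> (nat \<Rightarrow> ('x \<Rightarrow> real) \<Rightarrow> real) \<Rightarrow> (nat \<Rightarrow> 'x \<Rightarrow> real) \<Rightarrow> real" where
  "Kn n p X Y A0 \<rho> lam F gs =
     (1 / real n) * (\<Sum>i\<in>{1..n}. (Y i - (\<Sum>k\<in>{1..p}. gs k (X i)))^2) / 2
     + A0 * (\<Sum>k\<in>{1..p}. \<rho> k * F k (gs k) + lam k * emp_norm n X (gs k))"

definition is_decomp :: "nat \<Rightarrow> (nat \<Rightarrow> ('x \<Rightarrow> real) set) \<Rightarrow> (nat \<Rightarrow> 'x \<Rightarrow> real) \<Rightarrow> bool" where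
  "is_decomp p G gs \<longleftrightarrow> (\<forall>k\<in>{1..p}. gs k \<in> G k)"

definition is_minimizer where
  "is_minimizer n p X Y A0 \<rho> lam G F gs \<longleftrightarrow> is_decomp p G gs \<and>
     (\<forall>gs'. is_decomp p G gs' \<longrightarrow> Kn n p X Y A0 \<rho> lam F gs \<le> Kn n p X Y A0 \<rho> lam F gs')"

definition piecewise_const_jumps_in :: "real set \<Rightarrow> (real \<Rightarrow> real) \<Rightarrow> bool" where
  "piecewise_const_jumps_in T h \<longleftrightarrow>
     (\<forall>s t. 0 \<le> s \<and> s \<le> t \<and> t \<le> 1 \<and> {s..t} \<inter> T = {} \<longrightarrow> h s = h t)"

definition cont_piecewise_linear_breaks_in :: "real set \<Rightarrow> (real \<Rightarrow> real) \<Rightarrow> bool" where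
  "cont_piecewise_linear_breaks_in T h \<longleftrightarrow> continuous_on {0..1} h \<and>
     (\<forall>s t. 0 \<le> s \<and> s < t \<and> t \<le> 1 \<and> {s<..<t} \<inter> T = {} \<longrightarrow>
        (\<exists>a b. \<forall>u\<in>{s..t}. h u = a + b * u))"

end

theory Submission
  imports Defs
begin


definition idx :: "nat \<Rightarrow> (nat \<Rightarrow> real) \<Rightarrow> real \<Rightarrow> nat" where
  "idx r t u = card {a\<in>{1..r}. t a \<le> u}"

lemma idx_mono: "u \<le> v \<Longrightarrow> idx r t u \<le> idx r t v"
  unfolding idx_def by (rule card_mono) auto

lemma idx_le: "idx r t u \<le> r"
proof -
  have "card {a\<in>{1..r}. t a \<le> u} \<le> card {1..r}" by (rule card_mono) auto
  then show ?thesis unfolding idx_def by simp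
qed

lemma idx_eq:
  assumes sm: "\<forall>a b. a < b \<longrightarrow> b \<le> r \<longrightarrow> t a < t b"
    and "a \<le> r" "t a \<le> u" "a < r \<Longrightarrow> u < t (Suc a)"
  shows "idx r t u = a"
proof -
  have "{b\<in>{1..r}. t b \<le> u} = {1..a}"
  proof (intro set_eqI iffI)
    fix b assume b: "b \<in> {b\<in>{1..r}. t b \<le> u}"
    show "b \<in> {1..a}"
    proof (rule ccontr)
      assume "b \<notin> {1..a}"
      with b have ab: "a < b" by auto
      have ar: "a < r" using ab b by auto
      have "t (Suc a) \<le> t b"
      proof (cases "Suc a = b")
        case False
        then have "Suc a < b" using ab by auto
        then show ?thesis using sm[rule_format, of "Suc a" b] b by auto
      qed simp
      moreover have "u < t (Suc a)" using assms(4) ar .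
      ultimately show False using b by auto
    qed
  next
    fix b assume "b \<in> {1..a}"
    then have b: "1 \<le> b" "b \<le> a" by auto
    have "t b \<le> t a"
    proof (cases "b = a")
      case False
      then show ?thesis using sm[rule_format, of b a] b assms(2) by auto
    qed simp
    then show "b \<in> {b\<in>{1..r}. t b \<le> u}" using b assms(2,3) by auto
  qed
  then show ?thesis unfolding idx_def by simp
qed

lemma idx_t:
  assumes sm: "\<forall>a b. a < b \<longrightarrow> b \<le> r \<longrightarrow> t a < t b" and "a \<le> r"
  shows "idx r t (t a) = a"
  using idx_eq[OF sm assms(2)] sm assms(2) by auto

lemma idx_const:
  assumes "s \<le> u" "\<forall>b\<in>{1..r}. \<not> (s < t b \<and> t b \<le> u)"
  shows "idx r t u = idx r t s"
proof -
  have "{b\<in>{1..r}. t b \<le> u} = {b\<in>{1..r}. t b \<le> s}"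
  proof (intro set_eqI iffI)
    fix b assume "b \<in> {b\<in>{1..r}. t b \<le> u}"
    then have b: "b\<in>{1..r}" "t b \<le> u" by auto
    then have "\<not> (s < t b \<and> t b \<le> u)" using assms(2) by blast
    then show "b \<in> {b\<in>{1..r}. t b \<le> s}" using b by auto
  next
    fix b assume "b \<in> {b\<in>{1..r}. t b \<le> s}"
    then show "b \<in> {b\<in>{1..r}. t b \<le> u}" using assms(1) by simp
  qed
  then show ?thesis unfolding idx_def by simp
qed

lemma enum_finite:
  fixes T :: "real set"
  assumes "finite T" "T \<noteq> {}"
  shows "\<exists>(r::nat) (t::nat \<Rightarrow> real). T = t ` {0..r} \<and> (\<forall>a b. a < b \<longrightarrow> b \<le> r \<longrightarrow> t a < t b)"
proof -
  define xs where "xs = sorted_list_of_set T"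
  have ne: "xs \<noteq> []" using assms unfolding xs_def by simp
  then have len: "length xs \<ge> 1" by (cases xs) auto
  have st: "sorted_wrt (<) xs" unfolding xs_def by simp
  have set: "set xs = T" unfolding xs_def using assms by simp
  define r where "r = length xs - 1"
  have "{0..r} = {..<length xs}" using len r_def by auto
  have "T = (\<lambda>a. xs ! a) ` {..<length xs}"
  proof (intro set_eqI iffI)
    fix x assume "x \<in> T"
    then have "x \<in> set xs" using set by simp
    then obtain i where "i < length xs" "xs ! i = x" by (auto simp: in_set_conv_nth)
    then show "x \<in> (\<lambda>a. xs ! a) ` {..<length xs}" by force
  next
    fix x assume "x \<in> (\<lambda>a. xs ! a) ` {..<length xs}"
    then obtain i where "i < length xs" "xs ! i = x" by auto
    then have "x \<in> set xs" by auto
    then show "x \<in> T" using set by simp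
  qed
  then have "T = (\<lambda>a. xs ! a) ` {0..r}" using \<open>{0..r} = {..<length xs}\<close> by simp
  moreover have "\<forall>a b. a < b \<longrightarrow> b \<le> r \<longrightarrow> xs ! a < xs ! b"
  proof (intro allI impI)
    fix a b :: nat assume ab: "a < b" "b \<le> r"
    then have "b < length xs" using len unfolding r_def by linarith
    then show "xs ! a < xs ! b" using st ab(1) unfolding sorted_wrt_iff_nth_less by blast
  qed
  ultimately show ?thesis by (intro exI[where x=r] exI[where x="\<lambda>a. xs ! a"]) simp
qed


lemma dedup:
  fixes z :: "nat \<Rightarrow> real" and f :: "real \<Rightarrow> real"
  assumes "\<forall>i j. i \<le> j \<longrightarrow> j \<le> k \<longrightarrow> z i \<le> z j"
  shows "\<exists>(k'::nat) (z'::nat \<Rightarrow> real). strict_mono_on {0..k'} z' \<and> z' 0 = z 0 \<and> z' k' = z k \<and> z' ` {0..k'} \<subseteq> z ` {0..k}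
     \<and> (\<Sum>i\<in>{1..k'}. \<bar>f (z' i) - f (z' (i-1))\<bar>) = (\<Sum>i\<in>{1..k}. \<bar>f (z i) - f (z (i-1))\<bar>)"
  using assms
proof (induction k)
  case 0
  have "strict_mono_on {0..0::nat} z" by (auto simp: strict_mono_on_def)
  then show ?case by (intro exI[where x="0::nat"] exI[where x=z]) simp
next
  case (Suc k)
  then have "\<forall>i j. i \<le> j \<longrightarrow> j \<le> k \<longrightarrow> z i \<le> z j" by simp
  with Suc.IH obtain k' :: nat and z' :: "nat \<Rightarrow> real" where kz: "strict_mono_on {0..k'} z'" "z' 0 = z 0" "z' k' = z k"
    "z' ` {0..k'} \<subseteq> z ` {0..k}"
    "(\<Sum>i\<in>{1..k'}. \<bar>f (z' i) - f (z' (i-1))\<bar>) = (\<Sum>i\<in>{1..k}. \<bar>f (z i) - f (z (i-1))\<bar>)"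
    by blast
  have sumS: "(\<Sum>i\<in>{1..Suc k}. \<bar>f (z i) - f (z (i-1))\<bar>) = (\<Sum>i\<in>{1..k}. \<bar>f (z i) - f (z (i-1))\<bar>) + \<bar>f (z (Suc k)) - f (z k)\<bar>"
    by simp
  have zle: "z k \<le> z (Suc k)" using Suc.prems by simp
  have sub: "z ` {0..k} \<subseteq> z ` {0..Suc k}" by (rule image_mono) simp
  show ?case
  proof (cases "z (Suc k) = z k")
    case True
    have i1: "z' ` {0..k'} \<subseteq> z ` {0..Suc k}" using kz(4) sub by (rule order_trans)
    have i2: "(\<Sum>i\<in>{1..k'}. \<bar>f (z' i) - f (z' (i-1))\<bar>) = (\<Sum>i\<in>{1..Suc k}. \<bar>f (z i) - f (z (i-1))\<bar>)"
      using sumS kz(5) True by simp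
    have i3: "z' k' = z (Suc k)" using kz(3) True by simp
    show ?thesis
      by (intro exI[where x=k'] exI[where x=z'] conjI kz(1) kz(2) i1 i2 i3)
  next
    case False
    with zle have lt: "z k < z (Suc k)" by simp
    define z'' where "z'' = z'(Suc k' := z (Suc k))"
    have sm: "strict_mono_on {0..Suc k'} z''"
      unfolding strict_mono_on_def
    proof (intro allI impI, elim conjE)
      fix x y assume xy: "x \<in> {0..Suc k'}" "y \<in> {0..Suc k'}" "x < y"
      show "z'' x < z'' y"
      proof (cases "y = Suc k'")
        case True
        then have xk: "x \<le> k'" using xy by simp
        have "z' x \<le> z' k'"
        proof (cases "x = k'")
          case False
          then have "x < k'" using xk by simp
          then show ?thesis using strict_mono_onD[OF kz(1), of x k'] by simp
        qed simp
        then show ?thesis using True lt kz(3) xk unfolding z''_def by simp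
      next
        case False
        then have "y \<le> k'" "x \<le> k'" using xy by simp_all
        then show ?thesis using xy(3) strict_mono_onD[OF kz(1), of x y] False unfolding z''_def by simp
      qed
    qed
    have s1: "(\<Sum>i\<in>{1..k'}. \<bar>f (z'' i) - f (z'' (i-1))\<bar>) = (\<Sum>i\<in>{1..k'}. \<bar>f (z' i) - f (z' (i-1))\<bar>)"
      by (rule sum.cong) (auto simp: z''_def)
    have s2: "(\<Sum>i\<in>{1..Suc k'}. \<bar>f (z'' i) - f (z'' (i-1))\<bar>) = (\<Sum>i\<in>{1..k'}. \<bar>f (z'' i) - f (z'' (i-1))\<bar>) + \<bar>f (z (Suc k)) - f (z k)\<bar>"
      using kz(3) by (simp add: z''_def)
    have im: "z'' ` {0..Suc k'} \<subseteq> z ` {0..Suc k}"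
    proof
      fix y assume "y \<in> z'' ` {0..Suc k'}"
      then obtain x where x: "x \<in> {0..Suc k'}" "y = z'' x" by blast
      show "y \<in> z ` {0..Suc k}"
      proof (cases "x = Suc k'")
        case True then show ?thesis using x unfolding z''_def by simp
      next
        case False
        then have "x \<in> {0..k'}" "y = z' x" using x unfolding z''_def by simp_all
        then have "y \<in> z ` {0..k}" using kz(4) by blast
        then show ?thesis using sub by blast
      qed
    qed
    have e1: "z'' 0 = z 0" using kz(2) by (simp add: z''_def)
    have e2: "z'' (Suc k') = z (Suc k)" by (simp add: z''_def)
    have e3: "(\<Sum>i\<in>{1..Suc k'}. \<bar>f (z'' i) - f (z'' (i-1))\<bar>) = (\<Sum>i\<in>{1..Suc k}. \<bar>f (z i) - f (z (i-1))\<bar>)"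
      using s1 s2 kz(5) sumS by simp
    show ?thesis
      by (intro exI[where x="Suc k'"] exI[where x=z''] conjI sm e1 e2 e3 im)
  qed
qed

lemma TV_ge_mono:
  fixes z :: "nat \<Rightarrow> real" and f :: "real \<Rightarrow> real"
  assumes "\<forall>i j. i \<le> j \<longrightarrow> j \<le> k \<longrightarrow> z i \<le> z j" "\<forall>i\<le>k. 0 \<le> z i \<and> z i \<le> 1"
  shows "ereal (\<Sum>i\<in>{1..k}. \<bar>f (z i) - f (z (i-1))\<bar>) \<le> TV f"
proof -
  obtain k' :: nat and z' :: "nat \<Rightarrow> real" where kz: "strict_mono_on {0..k'} z'" "z' 0 = z 0" "z' k' = z k"
     "(\<Sum>i\<in>{1..k'}. \<bar>f (z' i) - f (z' (i-1))\<bar>) = (\<Sum>i\<in>{1..k}. \<bar>f (z i) - f (z (i-1))\<bar>)"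
    using dedup[OF assms(1), of f] by blast
  have "0 \<le> z' 0" "z' k' \<le> 1" using kz(2,3) assms(2) by simp_all
  then have mem: "(k', z') \<in> {(k::nat, z::nat \<Rightarrow> real). strict_mono_on {0..k} z \<and> 0 \<le> z 0 \<and> z k \<le> 1}"
    using kz(1) by simp
  have "ereal (\<Sum>i\<in>{1..fst (k',z')}. \<bar>f (snd (k',z') i) - f (snd (k',z') (i - 1))\<bar>) \<le> TV f"
    unfolding TV_def by (rule SUP_upper[OF mem])
  then show ?thesis using kz(4) by simp
qed

lemma TV_nonneg: "0 \<le> TV f"
proof -
  show ?thesis using TV_ge_mono[of 0 "\<lambda>_. 0" f] by (simp add: zero_ereal_def)
qed



lemma step_meas: "(\<lambda>u. g (idx r t u) :: real) \<in> borel_measurable borel"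
proof -
  have m1: "(\<lambda>u. real (idx r t u)) \<in> borel_measurable borel"
    by (rule borel_measurable_mono) (auto simp: mono_def idx_mono)
  have m2: "(\<lambda>y::real. g (nat \<lfloor>y\<rfloor>)) \<in> borel_measurable borel"
  proof (rule borel_measurable_piecewise_mono[where C="range (\<lambda>n::int. {real_of_int n..<real_of_int n + 1})"])
    show "countable (range (\<lambda>n::int. {real_of_int n..<real_of_int n + 1}))" by simp
    show "c \<in> sets borel" if "c \<in> range (\<lambda>n::int. {real_of_int n..<real_of_int n + 1})" for c
      using that by auto
    show "mono_on c (\<lambda>y::real. g (nat \<lfloor>y\<rfloor>))" if "c \<in> range (\<lambda>n::int. {real_of_int n..<real_of_int n + 1})" for c
    proof -
      from that obtain n :: int where c: "c = {real_of_int n..<real_of_int n + 1}" by auto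
      have "\<lfloor>y\<rfloor> = n" if "y \<in> c" for y using that c by (auto simp: floor_eq_iff)
      then show ?thesis by (auto simp: mono_on_def)
    qed
    show "\<Union> (range (\<lambda>n::int. {real_of_int n..<real_of_int n + 1})) = UNIV"
    proof (intro set_eqI iffI)
      fix y :: real
      have "y \<in> {real_of_int \<lfloor>y\<rfloor>..<real_of_int \<lfloor>y\<rfloor> + 1}" by auto
      then show "y \<in> \<Union> (range (\<lambda>n::int. {real_of_int n..<real_of_int n + 1}))" by blast
    qed auto
  qed
  have "(\<lambda>u. (\<lambda>y::real. g (nat \<lfloor>y\<rfloor>)) (real (idx r t u))) \<in> borel_measurable borel"
    by (rule measurable_compose[OF m1 m2])
  then show ?thesis by simp
qed

lemma step_absint: "(\<lambda>u. g (idx r t u) :: real) absolutely_integrable_on {a..b}"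
proof (rule measurable_bounded_by_integrable_imp_absolutely_integrable)
  show "(\<lambda>u. g (idx r t u)) \<in> borel_measurable (lebesgue_on {a..b})"
    using measurable_compose[OF id_borel_measurable_lebesgue_on step_meas[of g r t]] by simp
  show "{a..b} \<in> sets lebesgue" by simp
  show "(\<lambda>_. \<Sum>i\<le>r. \<bar>g i\<bar>) integrable_on {a..b}" by (rule Henstock_Kurzweil_Integration.integrable_const_ivl)
  show "norm (g (idx r t u)) \<le> (\<Sum>i\<le>r. \<bar>g i\<bar>)" if "u \<in> {a..b}" for u
  proof -
    have "idx r t u \<in> {..r}" using idx_le by auto
    then show ?thesis using member_le_sum[of "idx r t u" "{..r}" "\<lambda>i. \<bar>g i\<bar>"] by simp
  qed
qed




lemma t_mono:
  fixes a b r :: nat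
  assumes sm: "\<forall>a b. a < b \<longrightarrow> b \<le> r \<longrightarrow> t a < t b" and "a \<le> b" "b \<le> r"
  shows "t a \<le> (t b :: real)"
proof (cases "a = b")
  case False
  then have "a < b" using assms(2) by simp
  then have "t a < t b" using sm assms(3) by blast
  then show ?thesis by simp
qed simp

lemma m1_interp:
  assumes sm: "\<forall>a b. a < b \<longrightarrow> b \<le> r \<longrightarrow> t a < t b" and rng: "\<forall>a\<le>r. 0 \<le> t a \<and> t a \<le> 1"
    and hV: "h \<in> Vm 1"
  shows "(\<lambda>u. h (t (idx r t u))) \<in> Vm 1 \<and> TV (\<lambda>u. h (t (idx r t u))) \<le> TV h
     \<and> (\<forall>a\<le>r. h (t (idx r t (t a))) = h (t a))
     \<and> piecewise_const_jumps_in (t ` {0..r}) (\<lambda>u. h (t (idx r t u)))"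
proof -
  define h1 where "h1 = (\<lambda>u. h (t (idx r t u)))"
  have TVle: "TV h1 \<le> TV h"
    unfolding TV_def[of h1]
  proof (rule SUP_least)
    fix kz assume "kz \<in> {(k::nat, z::nat \<Rightarrow> real). strict_mono_on {0..k} z \<and> 0 \<le> z 0 \<and> z k \<le> 1}"
    then obtain k z where kz: "kz = (k, z)" "strict_mono_on {0..k} z" by auto
    define w where "w = (\<lambda>i. t (idx r t (z i)))"
    have wm: "\<forall>i j. i \<le> j \<longrightarrow> j \<le> k \<longrightarrow> w i \<le> w j"
    proof (intro allI impI)
      fix i j :: nat assume ij: "i \<le> j" "j \<le> k"
      have "z i \<le> z j"
      proof (cases "i = j")
        case False
        then show ?thesis using strict_mono_onD[OF kz(2), of i j] ij by simp
      qed simp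
      then have "idx r t (z i) \<le> idx r t (z j)" by (rule idx_mono)
      then show "w i \<le> w j" unfolding w_def using t_mono[OF sm _ idx_le] by blast
    qed
    have wr: "\<forall>i\<le>k. 0 \<le> w i \<and> w i \<le> 1" unfolding w_def using rng idx_le by blast
    have "ereal (\<Sum>i\<in>{1..k}. \<bar>h (w i) - h (w (i-1))\<bar>) \<le> TV h"
      by (rule TV_ge_mono[OF wm wr])
    then show "ereal (\<Sum>i\<in>{1..fst kz}. \<bar>h1 (snd kz i) - h1 (snd kz (i - 1))\<bar>) \<le> TV h"
      unfolding kz(1) h1_def w_def by simp
  qed
  have ai: "h1 absolutely_integrable_on {0..1}" unfolding h1_def by (rule step_absint)
  have "TV h < \<infinity>" using hV unfolding Vm_def by simp
  have fin: "TV h1 < \<infinity>" using TVle \<open>TV h < \<infinity>\<close> by (rule le_less_trans)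
  have V: "h1 \<in> Vm 1" unfolding Vm_def using ai fin by simp
  have at: "\<forall>a\<le>r. h1 (t a) = h (t a)" unfolding h1_def using idx_t[OF sm] by simp
  have pc: "piecewise_const_jumps_in (t ` {0..r}) h1"
    unfolding piecewise_const_jumps_in_def
  proof (intro allI impI, elim conjE)
    fix s v :: real assume sv: "0 \<le> s" "s \<le> v" "v \<le> 1" "{s..v} \<inter> t ` {0..r} = {}"
    have "\<forall>b\<in>{1..r}. \<not> (s < t b \<and> t b \<le> v)"
    proof
      fix b assume b: "b \<in> {1..r}"
      show "\<not> (s < t b \<and> t b \<le> v)"
      proof
        assume "s < t b \<and> t b \<le> v"
        then have "t b \<in> {s..v} \<inter> t ` {0..r}" using b by auto
        then show False using sv(4) by blast
      qed
    qed
    then have "idx r t v = idx r t s" by (rule idx_const[OF sv(2)])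
    then show "h1 s = h1 v" unfolding h1_def by simp
  qed
  show ?thesis using V TVle at pc unfolding h1_def by simp
qed




definition slope :: "(nat \<Rightarrow> real) \<Rightarrow> (real \<Rightarrow> real) \<Rightarrow> nat \<Rightarrow> real" where
  "slope t h a = (h (t (Suc a)) - h (t a)) / (t (Suc a) - t a)"
definition sig :: "nat \<Rightarrow> (nat \<Rightarrow> real) \<Rightarrow> (real \<Rightarrow> real) \<Rightarrow> nat \<Rightarrow> real" where
  "sig r t h a = (if r = 0 then 0 else slope t h (min a (r - 1)))"
definition dd :: "nat \<Rightarrow> (nat \<Rightarrow> real) \<Rightarrow> (real \<Rightarrow> real) \<Rightarrow> real \<Rightarrow> real" where
  "dd r t h u = sig r t h (idx r t u)"
definition hh :: "nat \<Rightarrow> (nat \<Rightarrow> real) \<Rightarrow> (real \<Rightarrow> real) \<Rightarrow> real \<Rightarrow> real" where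
  "hh r t h x = h (t 0) - integral {0..t 0} (dd r t h) + integral {0..x} (dd r t h)"

lemma dd_absint: "dd r t h absolutely_integrable_on {a..b}"
  unfolding dd_def by (rule step_absint)

lemma dd_int: "dd r t h integrable_on {a..b}"
  using dd_absint unfolding absolutely_integrable_on_def by blast

lemma dd_piece:
  assumes sm: "\<forall>a b. a < b \<longrightarrow> b \<le> r \<longrightarrow> t a < t b" and a: "a < r"
  shows "(dd r t h has_integral (h (t (Suc a)) - h (t a))) {t a..t (Suc a)}"
proof -
  have lt: "t a < t (Suc a)" using sm a by simp
  have c: "((\<lambda>_. slope t h a) has_integral ((t (Suc a) - t a) * slope t h a)) {t a..t (Suc a)}"
    using has_integral_const_real[of "slope t h a" "t a" "t (Suc a)"] lt by simp
  have "(t (Suc a) - t a) * slope t h a = h (t (Suc a)) - h (t a)"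
    using lt unfolding slope_def by simp
  with c have c2: "((\<lambda>_. slope t h a) has_integral (h (t (Suc a)) - h (t a))) {t a..t (Suc a)}" by simp
  show ?thesis
  proof (rule has_integral_spike_finite[OF _ _ c2])
    show "finite {t (Suc a)}" by simp
    fix u assume u: "u \<in> {t a..t (Suc a)} - {t (Suc a)}"
    then have "idx r t u = a" using idx_eq[OF sm, of a u] a by auto
    then show "dd r t h u = slope t h a" using a unfolding dd_def sig_def by simp
  qed
qed

lemma hh_at:
  assumes sm: "\<forall>a b. a < b \<longrightarrow> b \<le> r \<longrightarrow> t a < t b" and rng: "\<forall>a\<le>r. 0 \<le> t a \<and> t a \<le> 1"
  shows "a \<le> r \<Longrightarrow> hh r t h (t a) = h (t a)"
proof (induction a)
  case 0
  then show ?case unfolding hh_def by simp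
next
  case (Suc a)
  have ar: "a < r" using Suc.prems by simp
  have p: "integral {t a..t (Suc a)} (dd r t h) = h (t (Suc a)) - h (t a)"
    using dd_piece[OF sm ar] by (rule integral_unique)
  have "integral {0..t a} (dd r t h) + integral {t a..t (Suc a)} (dd r t h) = integral {0..t (Suc a)} (dd r t h)"
  proof (rule Henstock_Kurzweil_Integration.integral_combine)
    show "0 \<le> t a" using rng ar by simp
    show "t a \<le> t (Suc a)" using sm ar by (simp add: less_imp_le)
  qed (rule dd_int)
  then show ?case using Suc.IH ar p unfolding hh_def by simp
qed

lemma hh_combine:
  assumes "0 \<le> a" "a \<le> b"
  shows "hh r t h b = hh r t h a + integral {a..b} (dd r t h)"
proof -
  have "integral {0..a} (dd r t h) + integral {a..b} (dd r t h) = integral {0..b} (dd r t h)"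
    by (rule Henstock_Kurzweil_Integration.integral_combine) (use assms dd_int in auto)
  then show ?thesis unfolding hh_def by simp
qed

lemma hh_lin:
  assumes sv: "0 \<le> s" "s < v" "{s<..<v} \<inter> t ` {0..r} = {}"
  shows "\<exists>\<alpha> \<beta>. \<forall>u\<in>{s..v}. hh r t h u = \<alpha> + \<beta> * u"
proof -
  define \<beta> where "\<beta> = sig r t h (idx r t s)"
  have "hh r t h u = (hh r t h s - \<beta> * s) + \<beta> * u" if u: "u \<in> {s..v}" for u
  proof -
    have c: "((\<lambda>_. \<beta>) has_integral (\<beta> * (u - s))) {s..u}"
      using has_integral_const_real[of \<beta> s u] u by (simp add: mult.commute)
    have "(dd r t h has_integral (\<beta> * (u - s))) {s..u}"
    proof (rule has_integral_spike_finite[OF _ _ c])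
      show "finite {u}" by simp
      fix w assume w: "w \<in> {s..u} - {u}"
      have "\<forall>b\<in>{1..r}. \<not> (s < t b \<and> t b \<le> w)"
      proof
        fix b assume b: "b \<in> {1..r}"
        show "\<not> (s < t b \<and> t b \<le> w)"
        proof
          assume "s < t b \<and> t b \<le> w"
          then have "t b \<in> {s<..<v} \<inter> t ` {0..r}" using b w u by auto
          then show False using sv(3) by blast
        qed
      qed
      then have "idx r t w = idx r t s" using w by (intro idx_const) auto
      then show "dd r t h w = \<beta>" unfolding dd_def \<beta>_def by simp
    qed
    then have "integral {s..u} (dd r t h) = \<beta> * (u - s)" using u by (simp add: integral_unique)
    then show ?thesis using hh_combine[of s u r t h] sv(1) u by (simp add: algebra_simps)
  qed
  then show ?thesis by blast
qed

lemma hh_lip: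
  assumes "0 \<le> a" "a \<le> b"
  shows "\<bar>hh r t h b - hh r t h a\<bar> \<le> (\<Sum>i\<le>r. \<bar>sig r t h i\<bar>) * (b - a)"
proof -
  define M where "M = (\<Sum>i\<le>r. \<bar>sig r t h i\<bar>)"
  have bd: "norm (dd r t h u) \<le> M" for u
  proof -
    have "idx r t u \<in> {..r}" using idx_le by auto
    then show ?thesis unfolding dd_def M_def using member_le_sum[of "idx r t u" "{..r}" "\<lambda>i. \<bar>sig r t h i\<bar>"] by simp
  qed
  have "norm (integral {a..b} (dd r t h)) \<le> integral {a..b} (\<lambda>_. M)"
    by (rule integral_norm_bound_integral) (use dd_int bd in auto)
  then have "\<bar>integral {a..b} (dd r t h)\<bar> \<le> M * (b - a)" using assms by (simp add: mult.commute)
  then show ?thesis using hh_combine[OF assms, of r t h] unfolding M_def by simp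
qed




lemma hh_cont: "continuous_on {0..1} (hh r t h)"
proof -
  have "continuous_on {0..1} (\<lambda>x. integral {0..x} (dd r t h))"
    by (rule indefinite_integral_continuous_1[OF dd_int])
  then show ?thesis unfolding hh_def by (intro continuous_on_add continuous_on_const)
qed

lemma hh_abscont: "abs_cont01 (hh r t h)"
  unfolding abs_cont01_def
proof (intro allI impI)
  fix e :: real assume e: "e > 0"
  define M where "M = (\<Sum>i\<le>r. \<bar>sig r t h i\<bar>)"
  have M0: "0 \<le> M" unfolding M_def by (rule sum_nonneg) simp
  show "\<exists>d>0. \<forall>(k::nat) (a::nat \<Rightarrow> real) b. (\<forall>i<k. 0 \<le> a i \<and> a i \<le> b i \<and> b i \<le> 1) \<and>
             (\<forall>i<k. \<forall>l<k. i \<noteq> l \<longrightarrow> b i \<le> a l \<or> b l \<le> a i) \<and>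
             (\<Sum>i<k. b i - a i) < d \<longrightarrow> (\<Sum>i<k. \<bar>hh r t h (b i) - hh r t h (a i)\<bar>) < e"
  proof -
  have pos: "e / (M + 1) > 0" using e M0 by simp
  have key: "\<forall>(k::nat) (a::nat \<Rightarrow> real) b. (\<forall>i<k. 0 \<le> a i \<and> a i \<le> b i \<and> b i \<le> 1) \<and>
             (\<forall>i<k. \<forall>l<k. i \<noteq> l \<longrightarrow> b i \<le> a l \<or> b l \<le> a i) \<and>
             (\<Sum>i<k. b i - a i) < e / (M + 1) \<longrightarrow> (\<Sum>i<k. \<bar>hh r t h (b i) - hh r t h (a i)\<bar>) < e"
  proof (intro allI impI)
    fix k :: nat and a b :: "nat \<Rightarrow> real"
    assume H: "(\<forall>i<k. 0 \<le> a i \<and> a i \<le> b i \<and> b i \<le> 1) \<and>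
             (\<forall>i<k. \<forall>l<k. i \<noteq> l \<longrightarrow> b i \<le> a l \<or> b l \<le> a i) \<and>
             (\<Sum>i<k. b i - a i) < e / (M + 1)"
    have "(\<Sum>i<k. \<bar>hh r t h (b i) - hh r t h (a i)\<bar>) \<le> (\<Sum>i<k. M * (b i - a i))"
    proof (rule sum_mono)
      fix i assume "i \<in> {..<k}"
      then have "0 \<le> a i" "a i \<le> b i" using H by auto
      then show "\<bar>hh r t h (b i) - hh r t h (a i)\<bar> \<le> M * (b i - a i)"
        using hh_lip unfolding M_def by blast
    qed
    also have "\<dots> = M * (\<Sum>i<k. b i - a i)" by (simp add: sum_distrib_left)
    also have "\<dots> \<le> (M + 1) * (\<Sum>i<k. b i - a i)"
    proof -
      have "0 \<le> (\<Sum>i<k. b i - a i)" using H by (intro sum_nonneg) auto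
      then show ?thesis by (simp add: mult_right_mono)
    qed
    also have "\<dots> < (M + 1) * (e / (M + 1))"
      using H M0 by (intro mult_strict_left_mono) auto
    also have "\<dots> = e" using M0 by simp
    finally show "(\<Sum>i<k. \<bar>hh r t h (b i) - hh r t h (a i)\<bar>) < e" .
  qed
  show ?thesis by (intro exI[where x="e / (M + 1)"] conjI pos key)
  qed
qed

lemma dd_version: "dd r t h \<in> deriv_versions (hh r t h)"
  unfolding deriv_versions_def
proof (intro CollectI conjI ballI)
  show "dd r t h absolutely_integrable_on {0..1}" by (rule dd_absint)
  fix x :: real assume "x \<in> {0..1}"
  then show "hh r t h x = hh r t h 0 + integral {0..x} (dd r t h)"
    using hh_combine[of 0 x r t h] by simp
qed

lemma D_tele:
  fixes s :: "nat \<Rightarrow> real"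
  shows "a \<le> b \<Longrightarrow> \<bar>s b - s a\<bar> \<le> (\<Sum>l\<in>{1..b}. \<bar>s l - s (l-1)\<bar>) - (\<Sum>l\<in>{1..a}. \<bar>s l - s (l-1)\<bar>)"
proof (induction b)
  case 0
  then show ?case by simp
next
  case (Suc b)
  show ?case
  proof (cases "a = Suc b")
    case False
    then have ab: "a \<le> b" using Suc.prems by simp
    have "\<bar>s (Suc b) - s a\<bar> \<le> \<bar>s (Suc b) - s b\<bar> + \<bar>s b - s a\<bar>" by simp
    then show ?thesis using Suc.IH[OF ab] by simp
  qed simp
qed

lemma D_mono_seq:
  fixes s :: "nat \<Rightarrow> real" and w :: "nat \<Rightarrow> nat"
  shows "\<forall>i j. i \<le> j \<longrightarrow> j \<le> k \<longrightarrow> w i \<le> w j \<Longrightarrow>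
    (\<Sum>i\<in>{1..k}. \<bar>s (w i) - s (w (i-1))\<bar>) \<le> (\<Sum>l\<in>{1..w k}. \<bar>s l - s (l-1)\<bar>) - (\<Sum>l\<in>{1..w 0}. \<bar>s l - s (l-1)\<bar>)"
proof (induction k)
  case 0
  then show ?case by simp
next
  case (Suc k)
  then have m: "\<forall>i j. i \<le> j \<longrightarrow> j \<le> k \<longrightarrow> w i \<le> w j" by simp
  have "w k \<le> w (Suc k)" using Suc.prems by simp
  then have "\<bar>s (w (Suc k)) - s (w k)\<bar> \<le> (\<Sum>l\<in>{1..w (Suc k)}. \<bar>s l - s (l-1)\<bar>) - (\<Sum>l\<in>{1..w k}. \<bar>s l - s (l-1)\<bar>)"
    by (rule D_tele)
  then show ?case using Suc.IH[OF m] by simp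
qed

definition Vsum :: "nat \<Rightarrow> (nat \<Rightarrow> real) \<Rightarrow> (real \<Rightarrow> real) \<Rightarrow> real" where
  "Vsum r t h = (\<Sum>l\<in>{1..r-1}. \<bar>slope t h l - slope t h (l-1)\<bar>)"

lemma TV_dd:
  assumes sm: "\<forall>a b. a < b \<longrightarrow> b \<le> r \<longrightarrow> t a < t b"
  shows "TV (dd r t h) \<le> ereal (Vsum r t h)"
  unfolding TV_def[of "dd r t h"]
proof (rule SUP_least)
  fix kz assume "kz \<in> {(k::nat, z::nat \<Rightarrow> real). strict_mono_on {0..k} z \<and> 0 \<le> z 0 \<and> z k \<le> 1}"
  then obtain k z where kz: "kz = (k, z)" "strict_mono_on {0..k} z" by auto
  have V0: "0 \<le> Vsum r t h" unfolding Vsum_def by (rule sum_nonneg) simp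
  have "(\<Sum>i\<in>{1..k}. \<bar>dd r t h (z i) - dd r t h (z (i - 1))\<bar>) \<le> Vsum r t h"
  proof (cases "r = 0")
    case True
    then show ?thesis using V0 unfolding dd_def sig_def by simp
  next
    case False
    define w where "w = (\<lambda>i. min (idx r t (z i)) (r - 1))"
    have wm: "\<forall>i j. i \<le> j \<longrightarrow> j \<le> k \<longrightarrow> w i \<le> w j"
    proof (intro allI impI)
      fix i j :: nat assume ij: "i \<le> j" "j \<le> k"
      have "z i \<le> z j"
      proof (cases "i = j")
        case False
        then show ?thesis using strict_mono_onD[OF kz(2), of i j] ij by simp
      qed simp
      then have "idx r t (z i) \<le> idx r t (z j)" by (rule idx_mono)
      then show "w i \<le> w j" unfolding w_def by simp
    qed
    have eq: "dd r t h (z i) = slope t h (w i)" for i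
      using False unfolding dd_def sig_def w_def by simp
    have "(\<Sum>i\<in>{1..k}. \<bar>dd r t h (z i) - dd r t h (z (i - 1))\<bar>)
        = (\<Sum>i\<in>{1..k}. \<bar>slope t h (w i) - slope t h (w (i - 1))\<bar>)" using eq by simp
    also have "\<dots> \<le> (\<Sum>l\<in>{1..w k}. \<bar>slope t h l - slope t h (l-1)\<bar>) - (\<Sum>l\<in>{1..w 0}. \<bar>slope t h l - slope t h (l-1)\<bar>)"
      by (rule D_mono_seq[OF wm])
    also have "\<dots> \<le> (\<Sum>l\<in>{1..w k}. \<bar>slope t h l - slope t h (l-1)\<bar>)"
      by (simp add: sum_nonneg)
    also have "\<dots> \<le> Vsum r t h"
      unfolding Vsum_def by (rule sum_mono2) (auto simp: w_def)
    finally show ?thesis .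
  qed
  then show "ereal (\<Sum>i\<in>{1..fst kz}. \<bar>dd r t h (snd kz i) - dd r t h (snd kz (i - 1))\<bar>) \<le> ereal (Vsum r t h)"
    unfolding kz(1) by simp
qed




lemma V_le_TV:
  assumes sm: "\<forall>a b. a < b \<longrightarrow> b \<le> r \<longrightarrow> t a < t b" and rng: "\<forall>a\<le>r. 0 \<le> t a \<and> t a \<le> 1"
    and dv: "d \<in> deriv_versions h"
  shows "ereal (Vsum r t h) \<le> TV d"
proof (cases "TV d = \<infinity>")
  case True
  then show ?thesis by simp
next
  case False
  have "0 \<le> TV d" by (rule TV_nonneg)
  with False obtain T where TVd: "TV d = ereal T" by (cases "TV d") auto
  show ?thesis
  proof (cases "r = 0")
    case True
    then show ?thesis using TV_nonneg[of d] unfolding Vsum_def by (simp add: zero_ereal_def)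
  next
    case False
    have dvs: "d absolutely_integrable_on {0..1} \<and> (\<forall>x\<in>{0..1}. h x = h 0 + integral {0..x} d)"
      using dv unfolding deriv_versions_def by (rule CollectD)
    have dabs: "d absolutely_integrable_on {0..1}" using dvs by (rule conjunct1)
    have hv: "\<forall>x\<in>{0..1}. h x = h 0 + integral {0..x} d" using dvs by (rule conjunct2)
    have dint: "d integrable_on {0..1}" using dabs unfolding absolutely_integrable_on_def by blast
    define L where "L = (\<lambda>l. t (Suc l) - t l)"
    define f where "f = (\<lambda>l \<theta>. d (L l * \<theta> + t l))"
    have fl: "(f l has_integral slope t h l) {0..1}" if l: "l < r" for l
    proof -
      have lt: "t l < t (Suc l)" using sm l by simp
      have t0: "0 \<le> t l" and t1: "t (Suc l) \<le> 1" using rng l by auto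
      have di: "d integrable_on {0..t (Suc l)}"
        by (rule integrable_subinterval_real[OF dint]) (use t1 in auto)
      have comb: "integral {0..t l} d + integral {t l..t (Suc l)} d = integral {0..t (Suc l)} d"
        by (rule Henstock_Kurzweil_Integration.integral_combine) (use t0 lt di in auto)
      have "h (t (Suc l)) = h 0 + integral {0..t (Suc l)} d"
        by (rule hv[rule_format]) (use t0 t1 lt in auto)
      moreover have "h (t l) = h 0 + integral {0..t l} d"
        by (rule hv[rule_format]) (use t0 t1 lt in auto)
      ultimately have I: "integral {t l..t (Suc l)} d = h (t (Suc l)) - h (t l)" using comb by simp
      have di2: "d integrable_on {t l..t (Suc l)}"
        by (rule integrable_subinterval_real[OF dint]) (use t0 t1 in auto)
      then have hi: "(d has_integral integral {t l..t (Suc l)} d) (cbox (t l) (t (Suc l)))"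
        unfolding box_real(2) by (rule integrable_integral)
      have Lp: "0 < L l" using lt unfolding L_def by simp
      have A: "((\<lambda>x. d (L l *\<^sub>R x + t l)) has_integral (integral {t l..t (Suc l)} d /\<^sub>R L l ^ DIM(real)))
          (cbox ((t l - t l) /\<^sub>R L l) ((t (Suc l) - t l) /\<^sub>R L l))"
        by (rule has_integral_affinity'[OF hi Lp])
      have e1: "(t l - t l) /\<^sub>R L l = 0" by simp
      have e2: "(t (Suc l) - t l) /\<^sub>R L l = 1" using Lp unfolding L_def by simp
      have e3: "cbox (0::real) 1 = {0..1}" by (rule box_real(2))
      have e4: "integral {t l..t (Suc l)} d /\<^sub>R L l ^ DIM(real) = slope t h l"
      proof -
        have "integral {t l..t (Suc l)} d /\<^sub>R L l ^ DIM(real) = integral {t l..t (Suc l)} d / L l"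
          by (simp add: divide_inverse_commute)
        also have "\<dots> = slope t h l" unfolding I slope_def L_def by simp
        finally show ?thesis .
      qed
      have e5: "(\<lambda>x. d (L l *\<^sub>R x + t l)) = f l" unfolding f_def by simp
      show ?thesis using A unfolding e1 e2 e3 e4 e5 .
    qed
    define \<epsilon> where "\<epsilon> = (\<lambda>l. if 0 \<le> slope t h l - slope t h (l-1) then (1::real) else -1)"
    have F: "((\<lambda>\<theta>. \<Sum>l\<in>{1..r-1}. \<epsilon> l * (f l \<theta> - f (l-1) \<theta>)) has_integral
              (\<Sum>l\<in>{1..r-1}. \<epsilon> l * (slope t h l - slope t h (l-1)))) {0..1}"
    proof (rule has_integral_sum)
      fix l assume l: "l \<in> {1..r-1}"
      then have "l < r" "l - 1 < r" using False by auto
      then show "((\<lambda>\<theta>. \<epsilon> l * (f l \<theta> - f (l-1) \<theta>)) has_integral \<epsilon> l * (slope t h l - slope t h (l-1))) {0..1}"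
        using fl by (intro has_integral_mult_right has_integral_diff) auto
    qed simp
    have Veq: "(\<Sum>l\<in>{1..r-1}. \<epsilon> l * (slope t h l - slope t h (l-1))) = Vsum r t h"
      unfolding Vsum_def by (rule sum.cong) (auto simp: \<epsilon>_def)
    have C: "((\<lambda>_. T) has_integral T) {0..1::real}"
      using has_integral_const_real[of T 0 1] by simp
    have bound: "(\<Sum>l\<in>{1..r-1}. \<epsilon> l * (f l \<theta> - f (l-1) \<theta>)) \<le> T" if th: "\<theta> \<in> {0..1::real}" for \<theta>
    proof -
      define z where "z = (\<lambda>l. L l * \<theta> + t l)"
      have zu: "z i \<le> t (Suc i)" if "i < r" for i
      proof -
        have "0 < L i" using sm that unfolding L_def by simp
        then have "L i * \<theta> \<le> L i" using th by (simp add: mult_left_le)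
        then show ?thesis unfolding z_def L_def by simp
      qed
      have zl: "t i \<le> z i" if "i < r" for i
      proof -
        have "0 < L i" using sm that unfolding L_def by simp
        then show ?thesis using th unfolding z_def by simp
      qed
      have zm: "\<forall>i j. i \<le> j \<longrightarrow> j \<le> r - 1 \<longrightarrow> z i \<le> z j"
      proof (intro allI impI)
        fix i j :: nat assume ij: "i \<le> j" "j \<le> r - 1"
        show "z i \<le> z j"
        proof (cases "i = j")
          case False
          then have "Suc i \<le> j" "j < r" using ij False \<open>r \<noteq> 0\<close> by auto
          then have "t (Suc i) \<le> t j" using t_mono[OF sm] by simp
          moreover have "z i \<le> t (Suc i)" using zu \<open>Suc i \<le> j\<close> \<open>j < r\<close> by simp
          moreover have "t j \<le> z j" using zl \<open>j < r\<close> by simp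
          ultimately show ?thesis by simp
        qed simp
      qed
      have zr: "\<forall>i\<le>r - 1. 0 \<le> z i \<and> z i \<le> 1"
      proof (intro allI impI)
        fix i assume "i \<le> r - 1"
        then have ir: "i < r" using \<open>r \<noteq> 0\<close> by simp
        have "0 \<le> t i" "t (Suc i) \<le> 1" using rng ir by auto
        then show "0 \<le> z i \<and> z i \<le> 1" using zu[OF ir] zl[OF ir] by simp
      qed
      have "ereal (\<Sum>i\<in>{1..r-1}. \<bar>d (z i) - d (z (i-1))\<bar>) \<le> TV d"
        by (rule TV_ge_mono[OF zm zr])
      then have s2: "(\<Sum>i\<in>{1..r-1}. \<bar>d (z i) - d (z (i-1))\<bar>) \<le> T" using TVd by simp
      have "(\<Sum>l\<in>{1..r-1}. \<epsilon> l * (f l \<theta> - f (l-1) \<theta>)) \<le> (\<Sum>i\<in>{1..r-1}. \<bar>d (z i) - d (z (i-1))\<bar>)"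
      proof (rule sum_mono)
        fix l assume "l \<in> {1..r-1}"
        show "\<epsilon> l * (f l \<theta> - f (l-1) \<theta>) \<le> \<bar>d (z l) - d (z (l-1))\<bar>"
          unfolding \<epsilon>_def f_def z_def by auto
      qed
      then show ?thesis using s2 by simp
    qed
    have "(\<Sum>l\<in>{1..r-1}. \<epsilon> l * (slope t h l - slope t h (l-1))) \<le> T"
      by (rule has_integral_le[OF F C bound])
    then show ?thesis using Veq TVd by simp
  qed
qed




lemma m2_interp:
  assumes sm: "\<forall>a b. a < b \<longrightarrow> b \<le> r \<longrightarrow> t a < t b" and rng: "\<forall>a\<le>r. 0 \<le> t a \<and> t a \<le> 1"
    and hV: "h \<in> Vm 2"
  shows "hh r t h \<in> Vm 2 \<and> Vm_seminorm 2 (hh r t h) \<le> Vm_seminorm 2 h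
     \<and> (\<forall>a\<le>r. hh r t h (t a) = h (t a))
     \<and> cont_piecewise_linear_breaks_in (t ` {0..r}) (hh r t h)"
proof -
  have V2: "Vm 2 = {g. g absolutely_integrable_on {0..1} \<and> abs_cont01 g \<and> (\<exists>d\<in>deriv_versions g. TV d < \<infinity>)}"
    unfolding Vm_def by simp
  obtain d0 where d0: "d0 \<in> deriv_versions h" "TV d0 < \<infinity>" using hV unfolding V2 by blast
  have TVdd: "TV (dd r t h) \<le> ereal (Vsum r t h)" by (rule TV_dd[OF sm])
  have fin: "TV (dd r t h) < \<infinity>" using TVdd by (rule le_less_trans) simp
  have hhV: "hh r t h \<in> Vm 2"
    unfolding V2
  proof (intro CollectI conjI)
    show "hh r t h absolutely_integrable_on {0..1}" by (rule absolutely_integrable_continuous_real[OF hh_cont])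
    show "abs_cont01 (hh r t h)" by (rule hh_abscont)
    show "\<exists>d\<in>deriv_versions (hh r t h). TV d < \<infinity>" using dd_version fin by blast
  qed
  define A where "A = (INF d\<in>deriv_versions (hh r t h). TV d)"
  define B where "B = (INF d\<in>deriv_versions h. TV d)"
  have A0: "0 \<le> A" unfolding A_def by (rule INF_greatest) (rule TV_nonneg)
  have A1: "A \<le> TV (dd r t h)" unfolding A_def by (rule INF_lower[OF dd_version])
  have B1: "ereal (Vsum r t h) \<le> B" unfolding B_def by (rule INF_greatest) (rule V_le_TV[OF sm rng])
  have B2: "B \<le> TV d0" unfolding B_def by (rule INF_lower[OF d0(1)])
  have Bfin: "B \<noteq> \<infinity>" using B2 d0(2) by auto
  have AB: "A \<le> B" using A1 TVdd B1 by (meson order_trans)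
  have sn: "Vm_seminorm 2 (hh r t h) \<le> Vm_seminorm 2 h"
    unfolding Vm_seminorm_def A_def[symmetric] B_def[symmetric]
    using real_of_ereal_positive_mono[OF A0 AB Bfin] by simp
  have at: "\<forall>a\<le>r. hh r t h (t a) = h (t a)" using hh_at[OF sm rng] by blast
  have cpl: "cont_piecewise_linear_breaks_in (t ` {0..r}) (hh r t h)"
    unfolding cont_piecewise_linear_breaks_in_def
  proof (intro conjI allI impI)
    show "continuous_on {0..1} (hh r t h)" by (rule hh_cont)
    fix s v :: real assume H: "0 \<le> s \<and> s < v \<and> v \<le> 1 \<and> {s<..<v} \<inter> t ` {0..r} = {}"
    show "\<exists>a b. \<forall>u\<in>{s..v}. hh r t h u = a + b * u"
      by (rule hh_lin) (use H in auto)
  qed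
  show ?thesis using hhV sn at cpl by blast
qed




lemma replace_j:
  assumes min: "is_minimizer n p X Y A0 \<rho> lam G F gs" and j: "j \<in> {1..p}"
    and A0: "A0 > 0" and rho: "\<rho> j \<ge> 0"
    and gG: "g' \<in> G j" and agree: "\<forall>i\<in>{1..n}. g' (X i) = gs j (X i)"
    and Fle: "F j g' \<le> F j (gs j)"
  shows "is_minimizer n p X Y A0 \<rho> lam G F (gs(j := g'))"
proof -
  define gs' where "gs' = gs(j := g')"
  have dec: "is_decomp p G gs" and best: "\<forall>gs''. is_decomp p G gs'' \<longrightarrow> Kn n p X Y A0 \<rho> lam F gs \<le> Kn n p X Y A0 \<rho> lam F gs''"
    using min unfolding is_minimizer_def by blast+
  have dec': "is_decomp p G gs'"
    using dec gG unfolding is_decomp_def gs'_def by simp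
  have pt: "gs' k (X i) = gs k (X i)" if "i \<in> {1..n}" for k i
    using agree that unfolding gs'_def by simp
  have s1: "(\<Sum>i\<in>{1..n}. (Y i - (\<Sum>k\<in>{1..p}. gs' k (X i)))^2) = (\<Sum>i\<in>{1..n}. (Y i - (\<Sum>k\<in>{1..p}. gs k (X i)))^2)"
    using pt by simp
  have en: "emp_norm n X (gs' k) = emp_norm n X (gs k)" for k
    unfolding emp_norm_def using pt by simp
  have s2: "(\<Sum>k\<in>{1..p}. \<rho> k * F k (gs' k) + lam k * emp_norm n X (gs' k))
      \<le> (\<Sum>k\<in>{1..p}. \<rho> k * F k (gs k) + lam k * emp_norm n X (gs k))"
  proof (rule sum_mono)
    fix k assume "k \<in> {1..p}"
    show "\<rho> k * F k (gs' k) + lam k * emp_norm n X (gs' k) \<le> \<rho> k * F k (gs k) + lam k * emp_norm n X (gs k)"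
    proof (cases "k = j")
      case True
      have e1: "emp_norm n X g' = emp_norm n X (gs j)" using en[of j] unfolding gs'_def by simp
      have e2: "\<rho> j * F j g' \<le> \<rho> j * F j (gs j)" by (rule mult_left_mono[OF Fle rho])
      show ?thesis using True e1 e2 unfolding gs'_def by simp
    next
      case False
      then show ?thesis unfolding gs'_def by simp
    qed
  qed
  have "Kn n p X Y A0 \<rho> lam F gs' \<le> Kn n p X Y A0 \<rho> lam F gs"
    unfolding Kn_def s1 using s2 A0 by (simp add: mult_left_mono)
  then have "\<forall>gs''. is_decomp p G gs'' \<longrightarrow> Kn n p X Y A0 \<rho> lam F gs' \<le> Kn n p X Y A0 \<rho> lam F gs''"
    using best by (meson order_trans)
  then show ?thesis using dec' unfolding is_minimizer_def gs'_def by blast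
qed

theorem proposition2:
  fixes n p j c m :: nat
    and X :: "nat \<Rightarrow> (nat \<Rightarrow> real)" and Y :: "nat \<Rightarrow> real"
    and S :: "nat \<Rightarrow> nat set"
    and G :: "nat \<Rightarrow> ((nat \<Rightarrow> real) \<Rightarrow> real) set"
    and F :: "nat \<Rightarrow> ((nat \<Rightarrow> real) \<Rightarrow> real) \<Rightarrow> real"
    and A0 :: real and \<rho> lam :: "nat \<Rightarrow> real"
  assumes n_pos: "n \<ge> 1" and j_range: "j \<in> {1..p}"
    and A0: "A0 > 1"
    and rho_pos: "\<forall>k\<in>{1..p}. \<rho> k > 0" and lambda_pos: "\<forall>k\<in>{1..p}. lam k > 0"
    and G_dep: "\<forall>k\<in>{1..p}. \<forall>g\<in>G k. \<forall>x y. (\<forall>l\<in>S k. x l = y l) \<longrightarrow> g x = g y"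
    and G_space: "\<forall>k\<in>{1..p}-{j}. (\<lambda>x. 0) \<in> G k \<and> (\<forall>f\<in>G k. \<forall>g\<in>G k. (\<lambda>x. f x + g x) \<in> G k)
                     \<and> (\<forall>f\<in>G k. \<forall>a::real. (\<lambda>x. a * f x) \<in> G k)"
    and F_seminorm: "\<forall>k\<in>{1..p}-{j}. \<forall>f\<in>G k. \<forall>g\<in>G k. F k f \<ge> 0
                     \<and> F k (\<lambda>x. f x + g x) \<le> F k f + F k g
                     \<and> (\<forall>a::real. F k (\<lambda>x. a * f x) = \<bar>a\<bar> * F k f)"
    and S_j: "S j = {c}"
    and X_j_unit: "\<forall>i\<in>{1..n}. X i c \<in> {0..1}"
    and m_cases: "m = 1 \<or> m = 2"
    and G_j: "G j = {(\<lambda>x. h (x c)) | h. h \<in> Vm m}"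
    and F_j: "\<forall>h\<in>Vm m. F j (\<lambda>x. h (x c)) = Vm_seminorm m h"
    and exists_min: "\<exists>gs. is_minimizer n p X Y A0 \<rho> lam G F gs"
  shows "\<exists>gs h. is_minimizer n p X Y A0 \<rho> lam G F gs \<and> h \<in> Vm m \<and> gs j = (\<lambda>x. h (x c)) \<and>
           (if m = 1 then piecewise_const_jumps_in {X i c | i. i \<in> {1..n}} h
            else cont_piecewise_linear_breaks_in {X i c | i. i \<in> {1..n}} h)"
proof -
  obtain gs where gs: "is_minimizer n p X Y A0 \<rho> lam G F gs" using exists_min by blast
  then have "gs j \<in> G j" using j_range unfolding is_minimizer_def is_decomp_def by blast
  then obtain h where hV: "h \<in> Vm m" and gsj: "gs j = (\<lambda>x. h (x c))" unfolding G_j by (auto simp only: mem_Collect_eq)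
  define T where "T = {X i c | i. i \<in> {1..n}}"
  have Timg: "T = (\<lambda>i. X i c) ` {1..n}" unfolding T_def by auto
  have Tfin: "finite T" unfolding Timg by simp
  have Tne: "T \<noteq> {}" unfolding Timg using n_pos by simp
  obtain r :: nat and t :: "nat \<Rightarrow> real" where Tt: "T = t ` {0..r}"
    and sm: "\<forall>a b. a < b \<longrightarrow> b \<le> r \<longrightarrow> t a < t b"
    using enum_finite[OF Tfin Tne] by blast
  have rng: "\<forall>a\<le>r. 0 \<le> t a \<and> t a \<le> 1"
  proof (intro allI impI)
    fix a assume "a \<le> r"
    then have "t a \<in> T" unfolding Tt by simp
    then obtain i where "i \<in> {1..n}" "t a = X i c" unfolding Timg by blast
    then show "0 \<le> t a \<and> t a \<le> 1" using X_j_unit by auto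
  qed
  have ex: "\<exists>h'. h' \<in> Vm m \<and> Vm_seminorm m h' \<le> Vm_seminorm m h \<and> (\<forall>a\<le>r. h' (t a) = h (t a))
      \<and> (if m = 1 then piecewise_const_jumps_in T h' else cont_piecewise_linear_breaks_in T h')"
  proof (cases "m = 1")
    case True
    define h1 where "h1 = (\<lambda>u. h (t (idx r t u)))"
    have P: "h1 \<in> Vm 1 \<and> TV h1 \<le> TV h \<and> (\<forall>a\<le>r. h1 (t a) = h (t a)) \<and> piecewise_const_jumps_in (t ` {0..r}) h1"
      using m1_interp[OF sm rng] hV True unfolding h1_def by simp
    have "TV h < \<infinity>" using hV True unfolding Vm_def by simp
    then have "real_of_ereal (TV h1) \<le> real_of_ereal (TV h)"
      using real_of_ereal_positive_mono[OF TV_nonneg[of h1]] P by simp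
    then have sn1: "Vm_seminorm 1 h1 \<le> Vm_seminorm 1 h" unfolding Vm_seminorm_def by simp
    have V1: "h1 \<in> Vm m" using P True by simp
    have sn: "Vm_seminorm m h1 \<le> Vm_seminorm m h" using sn1 True by simp
    have at1: "\<forall>a\<le>r. h1 (t a) = h (t a)" using P by blast
    have pc1: "piecewise_const_jumps_in T h1" using P Tt by simp
    have shape: "if m = 1 then piecewise_const_jumps_in T h1 else cont_piecewise_linear_breaks_in T h1"
      using pc1 True by simp
    show ?thesis by (intro exI[where x=h1] conjI V1 sn at1 shape)
  next
    case False
    then have m2: "m = 2" using m_cases by simp
    have hV2: "h \<in> Vm 2" using hV m2 by simp
    have P: "hh r t h \<in> Vm 2 \<and> Vm_seminorm 2 (hh r t h) \<le> Vm_seminorm 2 h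
     \<and> (\<forall>a\<le>r. hh r t h (t a) = h (t a))
     \<and> cont_piecewise_linear_breaks_in (t ` {0..r}) (hh r t h)"
      by (rule m2_interp[OF sm rng hV2])
    have V1: "hh r t h \<in> Vm m" using P m2 by simp
    have sn: "Vm_seminorm m (hh r t h) \<le> Vm_seminorm m h" using P m2 by simp
    have at1: "\<forall>a\<le>r. hh r t h (t a) = h (t a)" using P by blast
    have pc1: "cont_piecewise_linear_breaks_in T (hh r t h)" using P Tt by simp
    have shape: "if m = 1 then piecewise_const_jumps_in T (hh r t h) else cont_piecewise_linear_breaks_in T (hh r t h)"
      using pc1 False by simp
    show ?thesis by (intro exI[where x="hh r t h"] conjI V1 sn at1 shape)
  qed
  then obtain h' where h'V: "h' \<in> Vm m" and h'sn: "Vm_seminorm m h' \<le> Vm_seminorm m h"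
    and h'at: "\<forall>a\<le>r. h' (t a) = h (t a)"
    and h'shape: "if m = 1 then piecewise_const_jumps_in T h' else cont_piecewise_linear_breaks_in T h'"
    by blast
  have agree: "\<forall>i\<in>{1..n}. (\<lambda>x. h' (x c)) (X i) = gs j (X i)"
  proof
    fix i assume "i \<in> {1..n}"
    then have "X i c \<in> T" unfolding Timg by simp
    then obtain a where "a \<le> r" "X i c = t a" unfolding Tt by auto
    then show "(\<lambda>x. h' (x c)) (X i) = gs j (X i)" using h'at gsj by simp
  qed
  have gG: "(\<lambda>x. h' (x c)) \<in> G j" unfolding G_j using h'V by (intro CollectI exI[where x=h']) simp
  have "F j (\<lambda>x. h' (x c)) = Vm_seminorm m h'" using F_j h'V by blast
  moreover have "F j (gs j) = Vm_seminorm m h" unfolding gsj using F_j hV by blast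
  ultimately have Fle: "F j (\<lambda>x. h' (x c)) \<le> F j (gs j)" using h'sn by simp
  have rj: "\<rho> j \<ge> 0" using rho_pos j_range by (simp add: less_imp_le)
  have min': "is_minimizer n p X Y A0 \<rho> lam G F (gs(j := (\<lambda>x. h' (x c))))"
    using replace_j[of n p X Y A0 \<rho> lam G F gs j "\<lambda>x. h' (x c)"] gs j_range A0 rj gG agree Fle by simp
  have e: "(gs(j := (\<lambda>x. h' (x c)))) j = (\<lambda>x. h' (x c))" by simp
  have sh: "if m = 1 then piecewise_const_jumps_in {X i c | i. i \<in> {1..n}} h'
            else cont_piecewise_linear_breaks_in {X i c | i. i \<in> {1..n}} h'"
    using h'shape unfolding T_def .
  show ?thesis
    by (intro exI[where x="gs(j := (\<lambda>x. h' (x c)))"] exI[where x=h'] conjI min' h'V e sh)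
qed


end
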